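(* For every $n\ge1$ and $t\in(0,1)$, the recurrence coefficients satisfy $$(\alpha+\beta+\gamma+2n+2)\alpha_n=2(t-1)r_n-2ty_n-(t-1)R_n+t\alpha+(t-1)\beta+t,$$ and \begin{align*} &(\alpha+\beta+\gamma+2n+1)(\alpha+\beta+\gamma+2n-1)\beta_n\\ &=[ty_n-(t-1)r_n]^2-(t-1)(2nt+\gamma t+\beta)r_n+t[(t-1)(2n+\gamma)-\alpha]y_n+n(n+\gamma)(t^2-t). \end{align*}
   Context: Fix $\alpha,\beta,\gamma>0$ and real constants $A,B$ with $A\ge0$, $A+B\ge0$, not both $A$ and $A+B$ equal to $0$. Let $\theta$ be the Heaviside function. For $t\in(0,1)$ put $w(x)=x^{\alpha}(1-x)^{\beta}|x-t|^{\gamma}(A+B\theta(x-t))$ on $[0,1]$. Let $P_n$ be the monic orthogonal polynomials w.r.t. $w$ on $[0,1]$, $\int_0^1P_mP_nw\,dx=h_n\delta_{mn}$, with recurrence $xP_n=P_{n+1}+\alpha_nP_n+\beta_nP_{n-1}$, $P_0=1$, $\beta_0P_{-1}=0$. Define $R_n=\frac{\beta}{h_n}\int_0^1\frac{P_n^2w}{1-y}dy$, and for $n\ge1$, $y_n=\frac{\alpha}{h_{n-1}}\int_0^1\frac{P_nP_{n-1}w}{y}dy$, $r_n=\frac{\beta}{h_{n-1}}\int_0^1\frac{P_nP_{n-1}w}{1-y}dy$. *)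

theory Defs
  imports "HOL-Analysis.Analysis" "HOL-Computational_Algebra.Polynomial"
begin

text \<open>Heaviside function (its value at 0 is irrelevant: a null set).\<close>
definition heaviside :: "real \<Rightarrow> real" where
  "heaviside x = (if x \<ge> 0 then 1 else 0)"

definition wt :: "real \<Rightarrow> real \<Rightarrow> real \<Rightarrow> real \<Rightarrow> real \<Rightarrow> real \<Rightarrow> real \<Rightarrow> real" where
  "wt alpha beta gamma A B t x =
     x powr alpha * (1 - x) powr beta * \<bar>x - t\<bar> powr gamma * (A + B * heaviside (x - t))"

definition ip :: "(real \<Rightarrow> real) \<Rightarrow> real poly \<Rightarrow> real poly \<Rightarrow> real" where
  "ip w p q = integral {0..1} (\<lambda>x. poly p x * poly q x * w x)"

definition monic_OP :: "(real \<Rightarrow> real) \<Rightarrow> (nat \<Rightarrow> real poly) \<Rightarrow> bool" where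
  "monic_OP w P \<longleftrightarrow> (\<forall>n. degree (P n) = n \<and> lead_coeff (P n) = 1) \<and>
                      (\<forall>m n. m \<noteq> n \<longrightarrow> ip w (P m) (P n) = 0)"

definition hn :: "(real \<Rightarrow> real) \<Rightarrow> (nat \<Rightarrow> real poly) \<Rightarrow> nat \<Rightarrow> real" where
  "hn w P n = ip w (P n) (P n)"

definition Rn :: "real \<Rightarrow> (real \<Rightarrow> real) \<Rightarrow> (nat \<Rightarrow> real poly) \<Rightarrow> nat \<Rightarrow> real" where
  "Rn beta w P n = beta / hn w P n *
     integral {0..1} (\<lambda>y. poly (P n) y ^ 2 * w y / (1 - y))"

definition yn :: "real \<Rightarrow> (real \<Rightarrow> real) \<Rightarrow> (nat \<Rightarrow> real poly) \<Rightarrow> nat \<Rightarrow> real" where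
  "yn alpha w P n = alpha / hn w P (n - 1) *
     integral {0..1} (\<lambda>y. poly (P n) y * poly (P (n - 1)) y * w y / y)"

definition rn :: "real \<Rightarrow> (real \<Rightarrow> real) \<Rightarrow> (nat \<Rightarrow> real poly) \<Rightarrow> nat \<Rightarrow> real" where
  "rn beta w P n = beta / hn w P (n - 1) *
     integral {0..1} (\<lambda>y. poly (P n) y * poly (P (n - 1)) y * w y / (1 - y))"

end

theory Submission
  imports Defs
begin

locale W =
  fixes al be ga A B t :: real
  assumes al: "al > 0" and be: "be > 0" and ga: "ga > 0"
    and A: "A \<ge> 0" and AB: "A + B \<ge> 0" and ABn: "\<not> (A = 0 \<and> A + B = 0)"
    and t0: "0 < t" and t1: "t < 1"
begin

abbreviation w where "w \<equiv> wt al be ga A B t"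

definition kf :: "real \<Rightarrow> real" where
  "kf x = A * \<bar>x - t\<bar> powr ga + B * (max (x - t) 0) powr ga"

lemma w_eq: "w x = x powr al * (1 - x) powr be * kf x"
  unfolding wt_def kf_def heaviside_def by (cases "x \<ge> t") (auto simp: algebra_simps)

lemma kf_cont: "continuous_on S kf"
  unfolding kf_def using ga by (intro continuous_intros continuous_on_powr') auto

lemma pow_al_cont: "continuous_on {0..1} (\<lambda>x::real. x powr al)"
  using al by (intro continuous_intros continuous_on_powr') auto

lemma pow_be_cont: "continuous_on {0..1} (\<lambda>x::real. (1 - x) powr be)"
  using be by (intro continuous_intros continuous_on_powr') auto

lemma w_cont: "continuous_on {0..1} w"
  unfolding w_eq by (intro continuous_on_mult pow_al_cont pow_be_cont kf_cont)

lemma intM: "(\<lambda>x. poly S x * w x) integrable_on {0..1}"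
  by (intro integrable_continuous_interval continuous_intros w_cont)

lemma bdd_cont: "continuous_on {0..1} f \<Longrightarrow> f \<in> borel_measurable (lebesgue_on {0..1}) \<and> bounded (f ` {0..1::real})"
  by (auto intro: continuous_imp_measurable_on_sets_lebesgue compact_imp_bounded compact_continuous_image)

lemma intL0: "(\<lambda>x. poly S x * w x / x) integrable_on {0..1}"
proof -
  let ?g = "\<lambda>x. poly S x * (1 - x) powr be * kf x"
  have gc: "continuous_on {0..1} ?g"
    by (intro continuous_on_mult pow_be_cont kf_cont continuous_on_poly continuous_on_id)
  have p: "(\<lambda>x. x powr (al - 1)) absolutely_integrable_on {0..1}"
    using al by (intro nonnegative_absolutely_integrable_1 integrable_on_powr_from_0) auto
  have "(\<lambda>x. ?g x * x powr (al - 1)) absolutely_integrable_on {0..1}"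
    using bdd_cont[OF gc] p by (intro absolutely_integrable_bounded_measurable_product_real) auto
  then have "(\<lambda>x. ?g x * x powr (al - 1)) integrable_on {0..1}"
    using absolutely_integrable_on_def by blast
  then show ?thesis
  proof (rule integrable_eq)
    fix x :: real assume x: "x \<in> {0..1}"
    show "?g x * x powr (al - 1) = poly S x * w x / x"
    proof (cases "x = 0")
      case True then show ?thesis by simp
    next
      case False then show ?thesis using x by (simp add: w_eq powr_diff)
    qed
  qed
qed

lemma intL1: "(\<lambda>x. poly S x * w x / (1 - x)) integrable_on {0..1}"
proof -
  let ?g = "\<lambda>x. poly S x * x powr al * kf x"
  have gc: "continuous_on {0..1} ?g"
    by (intro continuous_on_mult pow_al_cont kf_cont continuous_on_poly continuous_on_id)
  have i: "(\<lambda>x. (1 - x) powr (be - 1)) integrable_on {0..1}"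
  proof -
    have "((\<lambda>x. (1 - x) powr (be - 1)) has_integral ((\<lambda>x. - ((1 - x) powr be / be)) 1 - (\<lambda>x. - ((1 - x) powr be / be)) 0)) {0..1}"
    proof (rule fundamental_theorem_of_calculus_interior)
      show "continuous_on {0..1} (\<lambda>x. - ((1 - x) powr be / be))"
        by (intro continuous_on_minus continuous_on_divide pow_be_cont continuous_on_const) (use be in auto)
      fix x :: real assume x: "x \<in> {0<..<1}"
      show "((\<lambda>x. - ((1 - x) powr be / be)) has_vector_derivative (1 - x) powr (be - 1)) (at x)"
        unfolding has_real_derivative_iff_has_vector_derivative[symmetric]
        using x be by (auto intro!: derivative_eq_intros)
    qed simp
    then show ?thesis by blast
  qed
  have p: "(\<lambda>x. (1 - x) powr (be - 1)) absolutely_integrable_on {0..1}"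
    using i by (intro nonnegative_absolutely_integrable_1) auto
  have "(\<lambda>x. ?g x * (1 - x) powr (be - 1)) absolutely_integrable_on {0..1}"
    using bdd_cont[OF gc] p by (intro absolutely_integrable_bounded_measurable_product_real) auto
  then have "(\<lambda>x. ?g x * (1 - x) powr (be - 1)) integrable_on {0..1}"
    using absolutely_integrable_on_def by blast
  then show ?thesis
  proof (rule integrable_eq)
    fix x :: real assume x: "x \<in> {0..1}"
    show "?g x * (1 - x) powr (be - 1) = poly S x * w x / (1 - x)"
    proof (cases "x = 1")
      case True then show ?thesis by simp
    next
      case False then show ?thesis using x by (simp add: w_eq powr_diff)
    qed
  qed
qed



lemma powr_deriv:
  fixes g :: "real \<Rightarrow> real"
  assumes "0 < g x" "(g has_field_derivative m) (at x)"
  shows "((\<lambda>y. g y powr c) has_field_derivative (g x powr c * (c * m / g x))) (at x)"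
  by (rule DERIV_cong[OF DERIV_powr[OF assms(2) assms(1) DERIV_const]]) simp

lemma alg_test: fixes x u v a b c p q K :: real
 assumes "x \<noteq> 0" "u \<noteq> 0" "v \<noteq> 0"
 shows "K * ((1 * p + q * v) * (a * (b * c)) + (a * (al / x) * (b * c) + (b * (- be / u) * c + c * (ga / v) * b) * a) * (v * p))
  = K * ((p + v * q) * (a * (b * c)) + v * p * (a * (b * c)) * (al / x - be / u + ga / v))"
  using assms by (simp add: field_simps)

lemma G_deriv:
  fixes sg :: real
  assumes x: "0 < x" "x < 1" "0 < sg * (x - t)"
  shows "((\<lambda>y. K * ((y - t) * poly T y * (y powr al * ((1 - y) powr be * (sg * (y - t)) powr ga))))
     has_field_derivative
       K * ((poly T x + (x - t) * poly (pderiv T) x) * (x powr al * ((1 - x) powr be * (sg * (x - t)) powr ga))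
        + (x - t) * poly T x * (x powr al * ((1 - x) powr be * (sg * (x - t)) powr ga)) * (al / x - be / (1 - x) + ga / (x - t)))) (at x)"
proof -
  have d1: "((\<lambda>y. y - t) has_field_derivative 1) (at x)" by (rule derivative_eq_intros refl)+ simp
  have d2: "((\<lambda>y. y powr al) has_field_derivative (x powr al * (al * 1 / x))) (at x)"
    using powr_deriv[of "\<lambda>y. y" x 1 al] x by (simp add: DERIV_ident)
  have d3: "((\<lambda>y. (1 - y) powr be) has_field_derivative ((1 - x) powr be * (be * (-1) / (1 - x)))) (at x)"
    by (rule powr_deriv) (use x in \<open>auto intro!: derivative_eq_intros\<close>)
  have sg: "sg \<noteq> 0" "x - t \<noteq> 0" "1 - x \<noteq> 0" "x \<noteq> 0" using x by auto
  have d4': "((\<lambda>y. (sg * (y - t)) powr ga) has_field_derivative ((sg * (x - t)) powr ga * (ga * sg / (sg * (x - t))))) (at x)"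
    by (rule powr_deriv) (use x in \<open>auto intro!: derivative_eq_intros\<close>)
  have d4: "((\<lambda>y. (sg * (y - t)) powr ga) has_field_derivative ((sg * (x - t)) powr ga * (ga / (x - t)))) (at x)"
    using d4' sg by simp
  have d2: "((\<lambda>y. y powr al) has_field_derivative (x powr al * (al / x))) (at x)"
    using d2 by simp
  have d3: "((\<lambda>y. (1 - y) powr be) has_field_derivative ((1 - x) powr be * (- be / (1 - x)))) (at x)"
    using d3 by simp
  show ?thesis
    apply (rule DERIV_cong)
     apply (rule DERIV_cmult)
     apply (rule DERIV_mult[OF DERIV_mult[OF d1 poly_DERIV] DERIV_mult[OF d2 DERIV_mult[OF d3 d4]]])
    by (rule alg_test) (use sg in auto)
qed


definition fd :: "real poly \<Rightarrow> real \<Rightarrow> real" where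
  "fd T x = poly (pderiv ([:-t,1:]*T)) x * w x + al * (poly ([:-t,1:]*T) x * w x / x)
     - be * (poly ([:-t,1:]*T) x * w x / (1 - x)) + ga * (poly T x * w x)"

lemma alg2: fixes x u v E p q K :: real
 assumes "x \<noteq> 0" "u \<noteq> 0" "v \<noteq> 0"
 shows "K * ((p + v * q) * E + v * p * E * (al / x - be / u + ga / v))
   = (p + v * q) * (K * E) + al * (v * p * (K * E) / x) - be * (v * p * (K * E) / u) + ga * (p * (K * E))"
  using assms by (simp add: field_simps)

lemma F_deriv_gen:
  assumes x: "0 < x" "x < 1" "0 < sg * (x - t)" and U: "open U" "x \<in> U"
    and eq: "\<And>y. y \<in> U \<Longrightarrow> w y = K * (y powr al * ((1 - y) powr be * (sg * (y - t)) powr ga))"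
  shows "((\<lambda>y. poly ([:-t,1:]*T) y * w y) has_field_derivative fd T x) (at x)"
proof (rule has_field_derivative_transform_within_open[OF _ U])
  show "((\<lambda>y. K * ((y - t) * poly T y * (y powr al * ((1 - y) powr be * (sg * (y - t)) powr ga))))
     has_field_derivative fd T x) (at x)"
  proof (rule DERIV_cong[OF G_deriv[OF x]])
    have ne: "x \<noteq> 0" "1 - x \<noteq> 0" "x - t \<noteq> 0" using x by auto
    show "K * ((poly T x + (x - t) * poly (pderiv T) x) * (x powr al * ((1 - x) powr be * (sg * (x - t)) powr ga))
        + (x - t) * poly T x * (x powr al * ((1 - x) powr be * (sg * (x - t)) powr ga)) * (al / x - be / (1 - x) + ga / (x - t))) = fd T x"
    proof -
      have pd: "poly (pderiv ([:-t,1:]*T)) x = poly T x + (x - t) * poly (pderiv T) x"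
        unfolding pderiv_mult by (simp add: pderiv_pCons algebra_simps)
      have ps: "poly ([:-t,1:]*T) x = (x - t) * poly T x" by (simp add: algebra_simps)
      show ?thesis unfolding fd_def pd ps eq[OF U(2)] by (rule alg2[OF ne])
    qed
  qed
  fix y assume "y \<in> U"
  then show "K * ((y - t) * poly T y * (y powr al * ((1 - y) powr be * (sg * (y - t)) powr ga)))
     = poly ([:-t,1:]*T) y * w y"
    by (simp add: eq algebra_simps)
qed

lemma F_deriv:
  assumes x: "x \<in> {0<..<1} - {t}"
  shows "((\<lambda>y. poly ([:-t,1:]*T) y * w y) has_field_derivative fd T x) (at x)"
proof (cases "t < x")
  case True
  show ?thesis
  proof (rule F_deriv_gen[of x 1 "{t<..<1}" "A + B"])
    fix y assume y: "y \<in> {t<..<1}"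
    then show "w y = (A + B) * (y powr al * ((1 - y) powr be * (1 * (y - t)) powr ga))"
      by (simp add: w_eq kf_def algebra_simps)
  qed (use x True in auto)
next
  case False
  then have xt: "x < t" using x by auto
  show ?thesis
  proof (rule F_deriv_gen[of x "-1" "{0<..<t}" A])
    fix y assume y: "y \<in> {0<..<t}"
    then show "w y = A * (y powr al * ((1 - y) powr be * (-1 * (y - t)) powr ga))"
      using ga by (simp add: w_eq kf_def algebra_simps)
  qed (use x xt in auto)
qed

lemma IBP:
  "integral {0..1} (\<lambda>x. poly (pderiv ([:-t,1:]*T)) x * w x)
   + al * integral {0..1} (\<lambda>x. poly ([:-t,1:]*T) x * w x / x)
   - be * integral {0..1} (\<lambda>x. poly ([:-t,1:]*T) x * w x / (1 - x))
   + ga * integral {0..1} (\<lambda>x. poly T x * w x) = 0"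
proof -
  let ?F = "\<lambda>y. poly ([:-t,1:]*T) y * w y"
  have "(fd T has_integral (?F 1 - ?F 0)) {0..1}"
  proof (rule fundamental_theorem_of_calculus_interior_strong[of "{t}"])
    show "continuous_on {0..1} ?F" by (intro continuous_intros w_cont)
    show "\<And>x. x \<in> {0<..<1} - {t} \<Longrightarrow> (?F has_vector_derivative fd T x) (at x)"
      by (rule F_deriv[unfolded has_real_derivative_iff_has_vector_derivative])
  qed auto
  moreover have "w 1 = 0" "w 0 = 0" using al be by (auto simp: w_eq)
  ultimately have h1: "(fd T has_integral 0) {0..1}" by simp
  have h2: "(fd T has_integral
     (integral {0..1} (\<lambda>x. poly (pderiv ([:-t,1:]*T)) x * w x)
   + al * integral {0..1} (\<lambda>x. poly ([:-t,1:]*T) x * w x / x)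
   - be * integral {0..1} (\<lambda>x. poly ([:-t,1:]*T) x * w x / (1 - x))
   + ga * integral {0..1} (\<lambda>x. poly T x * w x))) {0..1}"
    unfolding fd_def
    by (intro has_integral_add has_integral_diff has_integral_mult_right integrable_integral intM intL0 intL1)
  show ?thesis using has_integral_unique[OF h1 h2] by simp
qed


lemma w_nonneg: "0 \<le> w x"
  unfolding wt_def heaviside_def using A AB by (auto intro!: mult_nonneg_nonneg)

lemma w_pos: "x \<in> {0<..<1} \<Longrightarrow> x \<noteq> t \<Longrightarrow> (x < t \<longrightarrow> A > 0) \<Longrightarrow> (x > t \<longrightarrow> A + B > 0) \<Longrightarrow> 0 < w x"
  unfolding wt_def heaviside_def by (auto intro!: mult_pos_pos)

lemma hpos:
  assumes p: "p \<noteq> 0"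
  shows "0 < integral {0..1} (\<lambda>x. poly p x * poly p x * w x)"
proof -
  let ?f = "\<lambda>x. poly p x * poly p x * w x"
  have nn: "\<And>x. 0 \<le> ?f x" using w_nonneg by simp
  have int: "?f integrable_on {0..1}"
    by (intro integrable_continuous_interval continuous_intros w_cont)
  have ge: "0 \<le> integral {0..1} ?f" by (rule integral_nonneg[OF int]) (use nn in auto)
  show ?thesis
  proof (rule ccontr)
    assume "\<not> ?thesis"
    then have "integral {0..1} ?f = 0" using ge by simp
    then have hi: "(?f has_integral 0) (cbox 0 1)" using int by (metis cbox_interval has_integral_integral)
    have z: "\<And>x. x \<in> {0..1} \<Longrightarrow> ?f x = 0"
    proof -
      fix x :: real assume "x \<in> {0..1}"
      then show "?f x = 0"
        by (intro has_integral_0_cbox_imp_0[OF _ _ hi]) (auto intro!: continuous_intros w_cont simp: nn)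
    qed
    obtain a b where ab: "a < b" "{a<..<b} \<subseteq> {0<..<1} - {t}" "\<And>x. x \<in> {a<..<b} \<Longrightarrow> 0 < w x"
    proof (cases "A > 0")
      case True
      show ?thesis by (rule that[of 0 t]) (use t0 t1 True in \<open>auto intro!: w_pos\<close>)
    next
      case False
      then have "A + B > 0" using A AB ABn by auto
      show ?thesis by (rule that[of t 1]) (use t0 t1 False \<open>A + B > 0\<close> in \<open>auto intro!: w_pos\<close>)
    qed
    have "{a<..<b} \<subseteq> {x. poly p x = 0}"
    proof
      fix x assume x: "x \<in> {a<..<b}"
      then have "x \<in> {0..1}" using ab(2) by auto
      then have "?f x = 0" using z by blast
      then show "x \<in> {x. poly p x = 0}" using ab(3)[OF x] by simp
    qed
    moreover have "finite {x. poly p x = 0}" using poly_roots_finite[OF p] .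
    ultimately have "finite {a<..<b}" by (rule finite_subset)
    then show False using ab(1) infinite_Ioo by blast
  qed
qed


definition M :: "real poly \<Rightarrow> real" where "M S = integral {0..1} (\<lambda>x. poly S x * w x)"
definition L0 :: "real poly \<Rightarrow> real" where "L0 S = integral {0..1} (\<lambda>x. poly S x * w x / x)"
definition L1 :: "real poly \<Rightarrow> real" where "L1 S = integral {0..1} (\<lambda>x. poly S x * w x / (1 - x))"

lemma M_add: "M (S + T) = M S + M T"
  unfolding M_def by (simp add: distrib_right integral_add intM)
lemma M_smult: "M (smult c S) = c * M S"
  unfolding M_def by (simp add: mult.assoc)
lemma M_diff: "M (S - T) = M S - M T"
  unfolding M_def by (simp add: left_diff_distrib integral_diff intM)
lemma M_zero: "M 0 = 0" unfolding M_def by simp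

lemma L0_add: "L0 (S + T) = L0 S + L0 T"
  unfolding L0_def by (simp add: distrib_right add_divide_distrib integral_add intL0)
lemma L0_smult: "L0 (smult c S) = c * L0 S"
  unfolding L0_def by (simp add: mult.assoc times_divide_eq_right[symmetric] del: times_divide_eq_right)
lemma L0_diff: "L0 (S - T) = L0 S - L0 T"
  unfolding L0_def by (simp add: left_diff_distrib diff_divide_distrib integral_diff intL0)

lemma L1_add: "L1 (S + T) = L1 S + L1 T"
  unfolding L1_def by (simp add: distrib_right add_divide_distrib integral_add intL1)
lemma L1_smult: "L1 (smult c S) = c * L1 S"
  unfolding L1_def by (simp add: mult.assoc times_divide_eq_right[symmetric] del: times_divide_eq_right)
lemma L1_diff: "L1 (S - T) = L1 S - L1 T"
  unfolding L1_def by (simp add: left_diff_distrib diff_divide_distrib integral_diff intL1)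

lemma L0_red: "L0 ([:0,1:] * T) = M T"
  unfolding L0_def M_def
proof (rule integral_cong)
  fix x :: real assume "x \<in> {0..1}"
  show "poly ([:0,1:] * T) x * w x / x = poly T x * w x"
    using al by (cases "x = 0") (auto simp: w_eq)
qed

lemma L1_red: "L1 ([:1,-1:] * T) = M T"
  unfolding L1_def M_def
proof (rule integral_cong)
  fix x :: real assume "x \<in> {0..1}"
  show "poly ([:1,-1:] * T) x * w x / (1 - x) = poly T x * w x"
  proof (cases "x = 1")
    case False
    then have "1 - x \<noteq> 0" by simp
    then show ?thesis by (simp add: field_simps)
  qed (use be in \<open>auto simp: w_eq\<close>)
qed

lemma IBP': "M (pderiv ([:-t,1:]*T)) + al * L0 ([:-t,1:]*T) - be * L1 ([:-t,1:]*T) + ga * M T = 0"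
  using IBP[of T] unfolding M_def L0_def L1_def .


end

locale WP = W +
  fixes P :: "nat \<Rightarrow> real poly"
  assumes OP: "monic_OP (wt al be ga A B t) P"
begin

lemma degP: "degree (P k) = k" and lcP: "coeff (P k) k = 1"
  using OP unfolding monic_OP_def by (auto, metis)

lemma ip_M: "ip w p q = M (p * q)"
  unfolding ip_def M_def by (simp add: mult.assoc)

lemma orthP: "m \<noteq> k \<Longrightarrow> M (P m * P k) = 0"
  using OP unfolding monic_OP_def ip_M by auto

definition h :: "nat \<Rightarrow> real" where "h k = M (P k * P k)"

lemma P_nz: "P k \<noteq> 0"
  using lcP[of k] by auto

lemma h_pos: "h k > 0"
  using hpos[OF P_nz[of k]] unfolding h_def M_def by (simp add: mult.assoc)

lemma orth: "S = 0 \<or> degree S < k \<Longrightarrow> M (P k * S) = 0"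
proof (induction "degree S" arbitrary: S rule: less_induct)
  case less
  show ?case
  proof (cases "S = 0")
    case True then show ?thesis by (simp add: M_zero)
  next
    case False
    let ?d = "degree S"
    let ?S' = "S - smult (coeff S ?d) (P ?d)"
    have dk: "?d < k" using less.prems False by auto
    have "M (P k * S) = M (P k * ?S') + coeff S ?d * M (P k * P ?d)"
      by (simp add: algebra_simps M_add M_diff M_smult flip: M_smult)
    also have "M (P k * P ?d) = 0" using orthP dk by simp
    also have "M (P k * ?S') = 0"
    proof (cases "?S' = 0")
      case True then show ?thesis by (simp add: M_zero)
    next
      case False
      have c: "coeff ?S' ?d = 0" using lcP[of ?d] by simp
      have dl: "degree ?S' \<le> ?d" using degP[of ?d] by (intro degree_diff_le) (auto simp: degree_smult_le)
      have "degree ?S' \<noteq> ?d" using c False leading_coeff_0_iff by metis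
      then have lt: "degree ?S' < ?d" using dl by simp
      show ?thesis by (rule less.hyps[OF lt]) (use lt dk in auto)
    qed
    finally show ?thesis by simp
  qed
qed


lemma lead: "degree S \<le> k \<Longrightarrow> M (P k * S) = coeff S k * h k"
proof -
  assume dS: "degree S \<le> k"
  let ?S' = "S - smult (coeff S k) (P k)"
  have "M (P k * S) = M (P k * ?S') + coeff S k * h k"
    unfolding h_def by (simp add: algebra_simps M_add M_diff M_smult flip: M_smult)
  moreover have "M (P k * ?S') = 0"
  proof (rule orth)
    have c: "coeff ?S' k = 0" using lcP[of k] by simp
    have dl: "degree ?S' \<le> k" using degP[of k] dS by (intro degree_diff_le) (auto simp: degree_smult_le)
    show "?S' = 0 \<or> degree ?S' < k"
    proof (cases "?S' = 0")
      case False
      have "degree ?S' \<noteq> k" using c False leading_coeff_0_iff by metis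
      then show ?thesis using dl by simp
    qed simp
  qed
  ultimately show ?thesis by simp
qed


lemma sd_coeff:
  fixes p :: "real poly"
  assumes "degree p = Suc m"
  shows "coeff (synthetic_div p c) m = coeff p (Suc m)"
proof -
  have d: "degree (synthetic_div p c) = m" using assms by (simp add: degree_synthetic_div)
  have "coeff p (Suc m) = coeff ([:-c,1:] * synthetic_div p c + [:poly p c:]) (Suc m)"
    by (simp only: synthetic_div_correct')
  also have "\<dots> = coeff (synthetic_div p c) m - c * coeff (synthetic_div p c) (Suc m)"
    by simp
  also have "coeff (synthetic_div p c) (Suc m) = 0" using d by (simp add: coeff_eq_0)
  finally show ?thesis by simp
qed

lemma L_split:
  fixes L :: "real poly \<Rightarrow> real"
  assumes Ladd: "\<And>S T. L (S + T) = L S + L T" and Lsm: "\<And>a S. L (smult a S) = a * L S"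
    and red: "\<And>T. L ([:-c,1:] * T) = M T"
  shows "L (X * Y) = M (X * synthetic_div Y c) + poly Y c * L X"
proof -
  have "X * Y = [:-c,1:] * (X * synthetic_div Y c) + smult (poly Y c) X"
    by (subst (1) synthetic_div_correct'[of c Y, symmetric]) (simp add: algebra_simps)
  then show ?thesis using Ladd Lsm red by simp
qed

lemma Qgen:
  fixes L :: "real poly \<Rightarrow> real"
  assumes Ladd: "\<And>S T. L (S + T) = L S + L T" and Lsm: "\<And>a S. L (smult a S) = a * L S"
    and red: "\<And>T. L ([:-c,1:] * T) = M T"
  shows "L (P (Suc m) * P m)^2 - L (P (Suc m) * P (Suc m)) * L (P m * P m) = h m * L (P (Suc m) * P m)"
proof -
  note sp = L_split[OF Ladd Lsm red]
  let ?p = "P (Suc m)" and ?q = "P m"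
  have dsp: "degree (synthetic_div ?p c) = m" by (simp add: degree_synthetic_div degP)
  have csp: "coeff (synthetic_div ?p c) m = 1" using sd_coeff[of ?p m c] by (simp add: degP lcP)
  have dsq: "synthetic_div ?q c = 0 \<or> degree (synthetic_div ?q c) < m"
    by (cases m) (auto simp: degree_synthetic_div degP synthetic_div_eq_0_iff)
  have dsq': "synthetic_div ?q c = 0 \<or> degree (synthetic_div ?q c) < Suc m" using dsq by auto
  have e1: "L (?p * ?q) = h m + poly ?p c * L ?q"
    using sp[of ?q ?p] lead[of "synthetic_div ?p c" m] dsp csp by (simp add: mult.commute)
  have e2: "L (?p * ?q) = poly ?q c * L ?p"
    using sp[of ?p ?q] orth[OF dsq'] by simp
  have e3: "L (?p * ?p) = poly ?p c * L ?p"
    using sp[of ?p ?p] orth[of "synthetic_div ?p c" "Suc m"] dsp by simp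
  have e4: "L (?q * ?q) = poly ?q c * L ?q"
    using sp[of ?q ?q] orth[OF dsq] by simp
  have X: "L (?p * ?q) * L (?p * ?q) = (h m + poly ?p c * L ?q) * (poly ?q c * L ?p)"
    by (rule arg_cong2[where f="(*)", OF e1 e2])
  show ?thesis
    unfolding power2_eq_square X
    unfolding e2 e3 e4
    by (simp add: algebra_simps)
qed


lemma peq: "(\<And>x. poly p x = poly q x) \<Longrightarrow> p = q" for p q :: "real poly"
  using poly_eq_poly_eq_iff by blast

definition Lt :: "real poly \<Rightarrow> real" where
  "Lt S = - (M (pderiv S) + al * L0 S - be * L1 S) / ga"

lemma Lt_add: "Lt (S + T) = Lt S + Lt T"
  unfolding Lt_def using ga by (simp add: pderiv_add M_add L0_add L1_add field_simps)
lemma Lt_smult: "Lt (smult a S) = a * Lt S"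
  unfolding Lt_def by (simp add: pderiv_smult M_smult L0_smult L1_smult field_simps)
lemma Lt_red: "Lt ([:-t,1:] * T) = M T"
  using IBP'[of T] ga unfolding Lt_def by (simp add: field_simps)

definition L1' :: "real poly \<Rightarrow> real" where "L1' S = - L1 S"
lemma L1'_add: "L1' (S + T) = L1' S + L1' T" unfolding L1'_def by (simp add: L1_add)
lemma L1'_smult: "L1' (smult a S) = a * L1' S" unfolding L1'_def by (simp add: L1_smult)
lemma L1'_red: "L1' ([:-1,1:] * T) = M T"
proof -
  have "[:-1,1:] * T = smult (-1) ([:1,-1:] * T)" by simp
  then show ?thesis unfolding L1'_def by (simp only: L1_smult L1_red)
qed
lemma L0_red': "L0 ([:-0,1:] * T) = M T" using L0_red by simp

lemma L0t: "L0 ([:-t,1:] * X) = M X - t * L0 X"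
proof -
  have "[:-t,1:] * X = [:0,1:] * X - smult t X" by simp
  then show ?thesis by (simp only: L0_diff L0_red L0_smult)
qed

lemma L1t: "L1 ([:-t,1:] * X) = (1 - t) * L1 X - M X"
proof -
  have "[:-t,1:] * X = smult (1 - t) X - [:1,-1:] * X"
    by (simp add: algebra_simps smult_diff_left)
  then show ?thesis by (simp only: L1_diff L1_red L1_smult)
qed

lemma M_pderiv_sq: "M (pderiv (P k * P k)) = 0"
proof -
  have "pderiv (P k * P k) = smult 2 (P k * pderiv (P k))" by (rule peq) (simp add: pderiv_mult)
  moreover have "M (P k * pderiv (P k)) = 0"
    by (rule orth) (cases k, auto simp: degree_pderiv degP pderiv_eq_0_iff)
  ultimately show ?thesis by (simp add: M_smult)
qed

lemma cW: "degree ([:-t,1:] * pderiv (P k)) \<le> k \<and> coeff ([:-t,1:] * pderiv (P k)) k = of_nat k"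
proof (cases k)
  case 0
  have "pderiv (P k) = 0" unfolding pderiv_eq_0_iff using degP[of k] 0 by simp
  then show ?thesis using 0 by simp
next
  case (Suc j)
  have d: "degree (pderiv (P k)) = j" using Suc by (simp add: degree_pderiv degP)
  have "degree ([:-t,1:] * pderiv (P k)) \<le> degree [:-t,1:] + degree (pderiv (P k))"
    by (rule degree_mult_le)
  then have dl: "degree ([:-t,1:] * pderiv (P k)) \<le> k" using d Suc by simp
  have "coeff ([:-t,1:] * pderiv (P k)) k = coeff (pderiv (P k)) j - t * coeff (pderiv (P k)) (Suc j)"
    using Suc by simp
  also have "coeff (pderiv (P k)) (Suc j) = 0" using d by (simp add: coeff_eq_0)
  also have "coeff (pderiv (P k)) j = of_nat k" using Suc lcP[of k] by (simp add: coeff_pderiv)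
  finally show ?thesis using dl by simp
qed

lemma E_k: "(al + be + ga + 2 * real k + 1) * h k = al * t * L0 (P k * P k) + be * (1 - t) * L1 (P k * P k)"
proof -
  let ?X = "P k * P k"
  have pd: "pderiv ([:-t,1:] * ?X) = ?X + smult 2 (P k * ([:-t,1:] * pderiv (P k)))"
    by (rule peq) (simp add: pderiv_mult pderiv_pCons pderiv_add pderiv_diff pderiv_smult pderiv_minus algebra_simps)
  have "M (P k * ([:-t,1:] * pderiv (P k))) = of_nat k * h k" using lead cW by simp
  then have m1: "M (pderiv ([:-t,1:] * ?X)) = h k + 2 * real k * h k"
    unfolding pd by (simp add: M_add M_smult h_def)
  show ?thesis using IBP'[of ?X] unfolding m1 L0t L1t h_def[symmetric]
    by (simp add: algebra_simps)
qed


lemma normQ: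
  fixes X U V c hq :: real
  assumes "hq \<noteq> 0" "X^2 - U * V = hq * X"
  shows "(c * X / hq) * ((c * X / hq) - c) = (c * U / hq) * (c * V / hq)"
proof -
  have "(c * X / hq) * ((c * X / hq) - c) = c^2 * (X^2 - hq * X) / hq^2"
    using assms(1) by (simp add: field_simps power2_eq_square)
  also have "X^2 - hq * X = U * V" using assms(2) by simp
  finally show ?thesis using assms(1) by (simp add: field_simps power2_eq_square)
qed

lemma normQ2:
  fixes X U V c hq :: real
  assumes "hq \<noteq> 0" "X^2 - U * V = - hq * X"
  shows "(c * X / hq) * ((c * X / hq) + c) = (c * U / hq) * (c * V / hq)"
proof -
  have "(c * X / hq) * ((c * X / hq) + c) = c^2 * (X^2 + hq * X) / hq^2"
    using assms(1) by (simp add: field_simps power2_eq_square)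
  also have "X^2 + hq * X = U * V" using assms(2) by simp
  finally show ?thesis using assms(1) by (simp add: field_simps power2_eq_square)
qed

lemma final_alg:
  fixes y r a0 a0' c1 c1' e e' z bn nn s :: real
  assumes F1: "y * (y - al) = a0 * a0'" and F2: "r * (r + be) = c1 * c1'"
    and F3: "z * (z - ga) = e * e'" and F4: "e = c1 - a0" and F5: "e' = c1' - a0'"
    and F6: "z = r - y - nn" and F7: "(s + 2 * nn + 1) * bn = t * a0 + (1 - t) * c1"
    and F8: "s + 2 * nn - 1 = t * a0' + (1 - t) * c1'" and s: "s = al + be + ga"
  shows "(al + be + ga + 2 * nn + 1) * (al + be + ga + 2 * nn - 1) * bn =
           (t * y - (t - 1) * r) ^ 2
           - (t - 1) * (2 * nn * t + ga * t + be) * r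
           + t * ((t - 1) * (2 * nn + ga) - al) * y
           + nn * (nn + ga) * (t ^ 2 - t)"
proof -
  have "(t * y - (t - 1) * r) ^ 2
           - (t - 1) * (2 * nn * t + ga * t + be) * r
           + t * ((t - 1) * (2 * nn + ga) - al) * y
           + nn * (nn + ga) * (t ^ 2 - t)
       = t^2 * (y * (y - al)) + (1 - t)^2 * (r * (r + be)) + t * (1 - t) * (r * (r + be) + y * (y - al) - z * (z - ga))"
    unfolding F6 by (simp add: algebra_simps power2_eq_square)
  also have "\<dots> = t^2 * (a0 * a0') + (1 - t)^2 * (c1 * c1') + t * (1 - t) * (c1 * c1' + a0 * a0' - (c1 - a0) * (c1' - a0'))"
    unfolding F1 F2 F3 F4 F5 ..
  also have "\<dots> = (t * a0 + (1 - t) * c1) * (t * a0' + (1 - t) * c1')"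
    by (simp add: algebra_simps power2_eq_square)
  also have "\<dots> = (s + 2 * nn + 1) * bn * (s + 2 * nn - 1)" unfolding F7 F8 ..
  finally show ?thesis unfolding s by (simp add: algebra_simps)
qed

lemma hn_eq: "hn w P k = h k"
  unfolding hn_def ip_M h_def ..

lemma deg_le_pred: "degree (S :: real poly) \<le> Suc m \<Longrightarrow> coeff S (Suc m) = 0 \<Longrightarrow> degree S \<le> m"
  by (metis le_SucE leading_coeff_0_iff degree_0 le0)

lemma main:
  assumes rec: "[:0,1:] * P (Suc m) = P (Suc (Suc m)) + smult an (P (Suc m)) + smult bn (P m)"
  shows "((al + be + ga + 2 * real (Suc m) + 2) * an =
           2 * (t - 1) * rn be w P (Suc m)
           - 2 * t * yn al w P (Suc m)
           - (t - 1) * Rn be w P (Suc m)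
           + t * al + (t - 1) * be + t) \<and>
         ((al + be + ga + 2 * real (Suc m) + 1) * (al + be + ga + 2 * real (Suc m) - 1) * bn =
           (t * yn al w P (Suc m) - (t - 1) * rn be w P (Suc m)) ^ 2
           - (t - 1) * (2 * real (Suc m) * t + ga * t + be) * rn be w P (Suc m)
           + t * ((t - 1) * (2 * real (Suc m) + ga) - al) * yn al w P (Suc m)
           + real (Suc m) * (real (Suc m) + ga) * (t ^ 2 - t))"
proof -
  define p where "p = P (Suc m)"
  define q where "q = P m"
  define hp where "hp = h (Suc m)"
  define hq where "hq = h m"
  have hp0: "hp > 0" and hq0: "hq > 0" unfolding hp_def hq_def by (rule h_pos)+
  have hpp: "M (p * p) = hp" unfolding hp_def h_def p_def ..
  have hqq: "M (q * q) = hq" unfolding hq_def h_def q_def ..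
  have Mpq: "M (p * q) = 0" and Mqp: "M (q * p) = 0" unfolding p_def q_def by (rule orthP, simp)+
  have Rn_eq: "Rn be w P (Suc m) = be / hp * L1 (p * p)"
    unfolding Rn_def hn_eq L1_def hp_def p_def by (simp add: power2_eq_square)
  have yn_eq: "yn al w P (Suc m) = al / hq * L0 (p * q)"
    unfolding yn_def hn_eq L0_def hq_def p_def q_def by simp
  have rn_eq: "rn be w P (Suc m) = be / hq * L1 (p * q)"
    unfolding rn_def hn_eq L1_def hq_def p_def q_def by simp
  have aM: "M (p * ([:0,1:] * p)) = an * hp"
  proof -
    have "M (p * ([:0,1:] * p)) = M (p * P (Suc (Suc m))) + an * M (p * p) + bn * M (p * q)"
      unfolding p_def q_def rec by (simp add: distrib_left M_add M_smult)
    then show ?thesis using orthP[of "Suc m" "Suc (Suc m)"] Mpq hpp by (simp add: p_def)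
  qed
  have bM: "bn * hq = hp"
  proof -
    have "M (q * ([:0,1:] * p)) = M (q * P (Suc (Suc m))) + an * M (q * p) + bn * M (q * q)"
      unfolding p_def q_def rec by (simp add: distrib_left M_add M_smult)
    then have "M (q * ([:0,1:] * p)) = bn * hq" using orthP[of m "Suc (Suc m)"] Mqp hqq by (simp add: q_def)
    moreover have "q * ([:0,1:] * p) = p * ([:0,1:] * q)" by (simp add: algebra_simps)
    moreover have "M (p * ([:0,1:] * q)) = hp"
    proof -
      have d: "degree ([:0,1:] * q) \<le> Suc m" and c: "coeff ([:0,1:] * q) (Suc m) = 1"
        using degP[of m] lcP[of m] unfolding q_def by (auto simp: degree_pCons_le)
      show ?thesis unfolding p_def hp_def lead[OF d] c by simp
    qed
    ultimately show ?thesis by (metis)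
  qed
  define W where "W = [:-t,1:] * pderiv p - smult (of_nat (Suc m)) p"
  define om where "om = coeff W m"
  have degW: "degree W \<le> m"
  proof (rule deg_le_pred)
    show "degree W \<le> Suc m" unfolding W_def p_def using cW[of "Suc m"] degP[of "Suc m"]
      by (intro degree_diff_le) (auto simp: degree_smult_le)
    show "coeff W (Suc m) = 0" unfolding W_def p_def using cW[of "Suc m"] lcP[of "Suc m"] by simp
  qed
  have MW1: "M (q * W) = om * hq" unfolding q_def om_def hq_def using lead degW by simp
  have MW2: "M (p * ([:0,1:] * W)) = om * hp"
  proof -
    have d: "degree ([:0,1:] * W) \<le> Suc m" and c: "coeff ([:0,1:] * W) (Suc m) = om"
      using degW unfolding om_def by (auto simp: degree_pCons_le)
    show ?thesis unfolding p_def hp_def lead[OF d] c ..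
  qed
  have pd1: "pderiv ([:-t,1:] * (p * ([:0,1:] * p))) = smult 2 (p * ([:0,1:] * p)) - smult t (p * p)
      + smult (2 * of_nat (Suc m)) (p * ([:0,1:] * p)) + smult 2 (p * ([:0,1:] * W))"
    by (rule peq) (simp add: W_def pderiv_mult pderiv_pCons pderiv_add pderiv_diff pderiv_smult pderiv_minus algebra_simps)
  have T1a: "p * ([:0,1:] * p) = [:0,1:] * (p * p)" by (simp add: algebra_simps)
  have T1b: "[:0,1:] * (p * p) = p * p - [:1,-1:] * (p * p)" by (simp add: algebra_simps)
  have L0T1: "L0 (p * ([:0,1:] * p)) = hp" unfolding T1a L0_red hpp ..
  have L1T1: "L1 (p * ([:0,1:] * p)) = L1 (p * p) - hp"
    unfolding T1a by (subst T1b) (simp only: L1_diff L1_red hpp)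
  have I1: "(2 * (an * hp) - t * hp + 2 * real (Suc m) * (an * hp) + 2 * (om * hp))
      + al * (an * hp - t * hp) - be * ((1 - t) * (L1 (p * p) - hp) - an * hp) + ga * (an * hp) = 0"
    using IBP'[of "p * ([:0,1:] * p)"] unfolding pd1 L0t L1t L0T1 L1T1
    by (simp only: M_add M_diff M_smult aM MW2 hpp)
  have pd2: "pderiv ([:-t,1:] * (p * q)) = p * q + p * ([:-t,1:] * pderiv q)
      + smult (of_nat (Suc m)) (q * p) + q * W"
    by (rule peq) (simp add: W_def pderiv_mult pderiv_pCons pderiv_add pderiv_diff pderiv_smult pderiv_minus algebra_simps)
  have Mpdq: "M (p * ([:-t,1:] * pderiv q)) = 0"
    unfolding p_def q_def by (rule orth) (use cW[of m] in auto)
  have I2: "om * hq + al * (0 - t * L0 (p * q)) - be * ((1 - t) * L1 (p * q) - 0) + ga * 0 = 0"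
    using IBP'[of "p * q"] unfolding pd2 L0t L1t
    by (simp only: M_add M_diff M_smult Mpq Mqp Mpdq MW1)
  have id1: "(al + be + ga + 2 * real (Suc m) + 2) * an =
           2 * (t - 1) * (be / hq * L1 (p * q)) - 2 * t * (al / hq * L0 (p * q))
           - (t - 1) * (be / hp * L1 (p * p)) + t * al + (t - 1) * be + t"
  proof -
    have om: "om = al * t * L0 (p * q) / hq + be * (1 - t) * L1 (p * q) / hq"
      using I2 hq0 by (simp add: field_simps)
    have I1': "2 * an - t + 2 * real (Suc m) * an + 2 * om + al * (an - t)
        - be * ((1 - t) * (L1 (p * p) / hp - 1) - an) + ga * an = 0"
    proof -
      have "hp * (2 * an - t + 2 * real (Suc m) * an + 2 * om + al * (an - t)
        - be * ((1 - t) * (L1 (p * p) / hp - 1) - an) + ga * an) = 0"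
        using I1 hp0 by (simp add: field_simps)
      then show ?thesis using hp0 by simp
    qed
    define Y where "Y = al / hq * L0 (p * q)"
    define Rr where "Rr = be / hq * L1 (p * q)"
    define RR where "RR = be / hp * L1 (p * p)"
    have om': "om = t * Y + (1 - t) * Rr" unfolding om Y_def Rr_def by (simp add: algebra_simps)
    have RR': "be * ((1 - t) * (L1 (p * p) / hp - 1) - an) = (1 - t) * RR - (1 - t) * be - be * an"
      unfolding RR_def by (simp add: algebra_simps)
    have I1'': "2 * an - t + 2 * real (Suc m) * an + 2 * (t * Y + (1 - t) * Rr) + al * (an - t)
        - ((1 - t) * RR - (1 - t) * be - be * an) + ga * an = 0"
      using I1' unfolding om' RR' .
    show ?thesis unfolding Y_def[symmetric] Rr_def[symmetric] RR_def[symmetric]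
      using I1'' by (simp add: algebra_simps)
  qed
  have Q0: "L0 (p * q)^2 - L0 (p * p) * L0 (q * q) = hq * L0 (p * q)"
    unfolding p_def q_def hq_def by (rule Qgen[OF L0_add L0_smult L0_red'])
  have Q1': "L1' (p * q)^2 - L1' (p * p) * L1' (q * q) = hq * L1' (p * q)"
    unfolding p_def q_def hq_def by (rule Qgen[OF L1'_add L1'_smult L1'_red])
  have Q1: "L1 (p * q)^2 - L1 (p * p) * L1 (q * q) = - hq * L1 (p * q)"
    using Q1' unfolding L1'_def by simp
  have Qt: "Lt (p * q)^2 - Lt (p * p) * Lt (q * q) = hq * Lt (p * q)"
    unfolding p_def q_def hq_def by (rule Qgen[OF Lt_add Lt_smult Lt_red])
  have Ltpp: "ga * Lt (p * p) = - (al * L0 (p * p) - be * L1 (p * p))"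
    unfolding Lt_def p_def using ga by (simp add: M_pderiv_sq)
  have Ltqq: "ga * Lt (q * q) = - (al * L0 (q * q) - be * L1 (q * q))"
    unfolding Lt_def q_def using ga by (simp add: M_pderiv_sq)
  have Mdpq: "M (pderiv (p * q)) = real (Suc m) * hq"
  proof -
    have "pderiv (p * q) = p * pderiv q + q * pderiv p" by (simp add: pderiv_mult)
    moreover have "M (p * pderiv q) = 0" unfolding p_def q_def
      by (rule orth) (cases m, auto simp: degree_pderiv degP pderiv_eq_0_iff)
    moreover have "M (q * pderiv p) = real (Suc m) * hq"
    proof -
      have d: "degree (pderiv p) \<le> m" unfolding p_def by (simp add: degree_pderiv degP)
      have c: "coeff (pderiv p) m = real (Suc m)" unfolding p_def using lcP[of "Suc m"] by (simp add: coeff_pderiv)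
      show ?thesis unfolding q_def hq_def lead[OF d] c ..
    qed
    ultimately show ?thesis by (simp add: M_add)
  qed
  have Ltpq: "ga * Lt (p * q) = - (real (Suc m) * hq + al * L0 (p * q) - be * L1 (p * q))"
    unfolding Lt_def Mdpq using ga by simp
  have Ep: "(al + be + ga + 2 * real (Suc m) + 1) * hp = al * t * L0 (p * p) + be * (1 - t) * L1 (p * p)"
    unfolding hp_def p_def by (rule E_k)
  have Eq: "(al + be + ga + 2 * real m + 1) * hq = al * t * L0 (q * q) + be * (1 - t) * L1 (q * q)"
    unfolding hq_def q_def by (rule E_k)
  have hqn: "hq \<noteq> 0" using hq0 by simp
  have id2: "(al + be + ga + 2 * real (Suc m) + 1) * (al + be + ga + 2 * real (Suc m) - 1) * bn =
           (t * (al * L0 (p * q) / hq) - (t - 1) * (be * L1 (p * q) / hq)) ^ 2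
           - (t - 1) * (2 * real (Suc m) * t + ga * t + be) * (be * L1 (p * q) / hq)
           + t * ((t - 1) * (2 * real (Suc m) + ga) - al) * (al * L0 (p * q) / hq)
           + real (Suc m) * (real (Suc m) + ga) * (t ^ 2 - t)"
  proof (rule final_alg[where s = "al + be + ga"])
    show "al * L0 (p * q) / hq * (al * L0 (p * q) / hq - al) = al * L0 (p * p) / hq * (al * L0 (q * q) / hq)"
      by (rule normQ[OF hqn Q0])
    show "be * L1 (p * q) / hq * (be * L1 (p * q) / hq + be) = be * L1 (p * p) / hq * (be * L1 (q * q) / hq)"
      by (rule normQ2[OF hqn Q1])
    show "ga * Lt (p * q) / hq * (ga * Lt (p * q) / hq - ga) = ga * Lt (p * p) / hq * (ga * Lt (q * q) / hq)"
      by (rule normQ[OF hqn Qt])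
    show "ga * Lt (p * p) / hq = be * L1 (p * p) / hq - al * L0 (p * p) / hq"
      unfolding Ltpp using hqn by (simp add: field_simps)
    show "ga * Lt (q * q) / hq = be * L1 (q * q) / hq - al * L0 (q * q) / hq"
      unfolding Ltqq using hqn by (simp add: field_simps)
    show "ga * Lt (p * q) / hq = be * L1 (p * q) / hq - al * L0 (p * q) / hq - real (Suc m)"
      unfolding Ltpq using hqn by (simp add: field_simps)
    show "(al + be + ga + 2 * real (Suc m) + 1) * bn = t * (al * L0 (p * p) / hq) + (1 - t) * (be * L1 (p * p) / hq)"
      using Ep hqn unfolding bM[symmetric] by (simp add: field_simps)
    show "al + be + ga + 2 * real (Suc m) - 1 = t * (al * L0 (q * q) / hq) + (1 - t) * (be * L1 (q * q) / hq)"
      using Eq hqn by (simp add: field_simps)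
  qed simp
  show ?thesis unfolding Rn_eq yn_eq rn_eq
    using id1 id2 by (simp add: algebra_simps)
qed

end

theorem proposition3p1:
  fixes alpha beta gamma A B t :: real
    and P :: "nat \<Rightarrow> real poly" and n :: nat and an bn :: real
  assumes "alpha > 0" "beta > 0" "gamma > 0"
    and "A \<ge> 0" "A + B \<ge> 0" "\<not> (A = 0 \<and> A + B = 0)"
    and "0 < t" "t < 1"
    and OP: "monic_OP (wt alpha beta gamma A B t) P"
    and "n \<ge> 1"
    and rec: "[:0, 1:] * P n = P (Suc n) + smult an (P n) + smult bn (P (n - 1))"
  shows "((alpha + beta + gamma + 2 * real n + 2) * an =
           2 * (t - 1) * rn beta (wt alpha beta gamma A B t) P n
           - 2 * t * yn alpha (wt alpha beta gamma A B t) P n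
           - (t - 1) * Rn beta (wt alpha beta gamma A B t) P n
           + t * alpha + (t - 1) * beta + t) \<and>
         ((alpha + beta + gamma + 2 * real n + 1) * (alpha + beta + gamma + 2 * real n - 1) * bn =
           (t * yn alpha (wt alpha beta gamma A B t) P n
              - (t - 1) * rn beta (wt alpha beta gamma A B t) P n) ^ 2
           - (t - 1) * (2 * real n * t + gamma * t + beta) * rn beta (wt alpha beta gamma A B t) P n
           + t * ((t - 1) * (2 * real n + gamma) - alpha) * yn alpha (wt alpha beta gamma A B t) P n
           + real n * (real n + gamma) * (t ^ 2 - t))"
  proof -
  obtain m where n: "n = Suc m" using \<open>n \<ge> 1\<close> by (cases n) auto
  interpret WP alpha beta gamma A B t P
    by unfold_locales (use assms in auto)
  have r: "[:0,1:] * P (Suc m) = P (Suc (Suc m)) + smult an (P (Suc m)) + smult bn (P m)"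
    using rec unfolding n by simp
  show ?thesis using main[OF r] unfolding n by simp
qed

end
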